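(* Let $n\ge4$ and let $h=\prod_{x}L_{x,i_{n-1}}$, where $x$ runs over a set of representatives of $Q_{n-2}/\{1,-1\}$ (the factors commute and do not depend on the choice of representatives). Then $h(z)=z$ for all $z\in Q_{n-1}$ and $h(z)=-z$ for all $z\in Q_n\setminus Q_{n-1}$; i.e. $h=\prod(z,-z)$ over representatives $z$ of $(Q_n\setminus Q_{n-1})/\{1,-1\}$.
   Context: Cayley--Dickson loops: $Q_0=\{1,-1\}\subset\mathbb{R}$ with conjugation $x^*=x$. For $n\ge1$, $Q_n=\{(x,0),(x,1)\mid x\in Q_{n-1}\}$ with multiplication $(x,0)(y,0)=(xy,0)$, $(x,0)(y,1)=(yx,1)$, $(x,1)(y,0)=(xy^*,1)$, $(x,1)(y,1)=(-y^*x,0)$ and conjugation $(x,0)^*=(x^*,0)$, $(x,1)^*=(-x,1)$, where $-(x,a)=(-x,a)$. $Q_n$ is a loop with neutral element $1=(1,0,\dots,0)$; $-x=(-1)x$. $Q_{n-1}$ is identified with the subloop $\{(x,0)\}\subset Q_n$, so $Q_{n-2}\subset Q_{n-1}\subset Q_n$. Canonical generators: $i_n=(1_{Q_{n-1}},1)\in Q_n$, and $i_1,\dots,i_{n-1}$ are the canonical generators of $Q_{n-1}\subset Q_n$. $L_x(a)=xa$, $L_{x,y}=L_{yx}^{-1}L_yL_x$. *)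

theory Defs
  imports Main
begin

text \<open>An element of Q_n is encoded as a bool list of length n+1:
  Q_0 = {[False], [True]} encodes {1, -1}; the element (x,a) of Q_n (a = 0/1) is encoded
  as a # x. Thus Q_{n-1} embeds into Q_n via x \<mapsto> False # x.\<close>

definition Q :: "nat \<Rightarrow> bool list set" where
  "Q n = {xs. length xs = Suc n}"

fun cd_neg :: "bool list \<Rightarrow> bool list" where
  "cd_neg [] = []"
| "cd_neg [s] = [\<not> s]"
| "cd_neg (a # b # x) = a # cd_neg (b # x)"

fun cd_conj :: "bool list \<Rightarrow> bool list" where
  "cd_conj [] = []"
| "cd_conj [s] = [s]"
| "cd_conj (a # b # x) = (if a then a # cd_neg (b # x) else a # cd_conj (b # x))"

lemma length_cd_neg [simp]: "length (cd_neg x) = length x"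
  by (induction x rule: cd_neg.induct) auto

lemma length_cd_conj [simp]: "length (cd_conj x) = length x"
  by (induction x rule: cd_conj.induct) auto

function cd_mult :: "bool list \<Rightarrow> bool list \<Rightarrow> bool list" where
  "cd_mult [s] [t] = [s \<noteq> t]"
| "cd_mult (a # b # x) (c # d # y) =
     (if a then
        (if c then False # cd_neg (cd_mult (cd_conj (d # y)) (b # x))
         else True # cd_mult (b # x) (cd_conj (d # y)))
      else
        (if c then True # cd_mult (d # y) (b # x)
         else False # cd_mult (b # x) (d # y)))"
| "cd_mult [] _ = []"
| "cd_mult [_] [] = []"
| "cd_mult [_] (_ # _ # _) = []"
| "cd_mult (_ # _ # _) [] = []"
| "cd_mult (_ # _ # _) [_] = []"
  by pat_completeness auto
termination
  by (relation "measure (\<lambda>(x, y). length x + length y)") auto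

definition cd_one :: "nat \<Rightarrow> bool list" where
  "cd_one k = replicate (Suc k) False"

definition gen_nm1 :: "nat \<Rightarrow> bool list" where
  "gen_nm1 n = False # True # cd_one (n - 2)"

definition Lmap :: "bool list \<Rightarrow> bool list \<Rightarrow> bool list" where
  "Lmap x a = cd_mult x a"

definition Lxy :: "nat \<Rightarrow> bool list \<Rightarrow> bool list \<Rightarrow> bool list \<Rightarrow> bool list" where
  "Lxy n x y = inv_into (Q n) (Lmap (cd_mult y x)) \<circ> Lmap y \<circ> Lmap x"

definition reps_list :: "nat \<Rightarrow> bool list list \<Rightarrow> bool" where
  "reps_list k rs \<longleftrightarrow> distinct rs \<and> set rs \<subseteq> Q k \<and>
     (\<forall>x \<in> Q k. (x \<in> set rs) \<noteq> (cd_neg x \<in> set rs))"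

definition hprod :: "nat \<Rightarrow> bool list list \<Rightarrow> bool list \<Rightarrow> bool list" where
  "hprod n rs = foldr (\<lambda>x f. Lxy n (False # False # x) (gen_nm1 n) \<circ> f) rs id"

end

theory Submission
  imports Defs
begin

fun isreal :: "bool list \<Rightarrow> bool" where
  "isreal [] = False"
| "isreal [s] = True"
| "isreal (a # b # x) = (\<not> a \<and> isreal (b # x))"

definition anti :: "bool list \<Rightarrow> bool list \<Rightarrow> bool" where
  "anti x p \<longleftrightarrow> \<not> isreal x \<and> \<not> isreal p \<and> x \<noteq> p \<and> x \<noteq> cd_neg p"

lemma neg_cons[simp]: "u \<noteq> [] \<Longrightarrow> cd_neg (a # u) = a # cd_neg u"
  by (cases u) auto
lemma conj_cons[simp]: "u \<noteq> [] \<Longrightarrow> cd_conj (a # u) = (if a then a # cd_neg u else a # cd_conj u)"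
  by (cases u) auto
lemma isreal_cons[simp]: "u \<noteq> [] \<Longrightarrow> isreal (a # u) = (\<not> a \<and> isreal u)"
  by (cases u) auto
lemma mult_cons[simp]: "u \<noteq> [] \<Longrightarrow> v \<noteq> [] \<Longrightarrow> cd_mult (a # u) (c # v) =
     (if a then
        (if c then False # cd_neg (cd_mult (cd_conj v) u)
         else True # cd_mult u (cd_conj v))
      else
        (if c then True # cd_mult v u
         else False # cd_mult u v))"
  by (cases u; cases v) auto

lemma length_mult[simp]: "length x = length y \<Longrightarrow> length (cd_mult x y) = length x"
  by (induction x y rule: cd_mult.induct) auto

lemma mult_ne[simp]: "length x = length y \<Longrightarrow> x \<noteq> [] \<Longrightarrow> cd_mult x y \<noteq> []"
  using length_mult by (metis length_0_conv)

lemma neg_ne[simp]: "x \<noteq> [] \<Longrightarrow> cd_neg x \<noteq> []"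
  by (metis length_0_conv length_cd_neg)
lemma conj_ne[simp]: "x \<noteq> [] \<Longrightarrow> cd_conj x \<noteq> []"
  by (metis length_0_conv length_cd_conj)

lemma neg_neg[simp]: "cd_neg (cd_neg x) = x"
  by (induction x rule: cd_neg.induct) auto

lemma neg_fix[simp]: "x \<noteq> [] \<Longrightarrow> cd_neg x \<noteq> x"
  by (induction x rule: cd_neg.induct) auto

lemma neg_fix': "x \<noteq> [] \<Longrightarrow> x \<noteq> cd_neg x"
  using neg_fix[of x] by metis

lemma neg_inj[simp]: "(cd_neg x = cd_neg y) = (x = y)"
  by (metis neg_neg)

lemma conj_neg: "cd_conj (cd_neg x) = cd_neg (cd_conj x)"
  by (induction x rule: cd_conj.induct) auto

lemma conj_conj[simp]: "cd_conj (cd_conj x) = x"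
  by (induction x rule: cd_conj.induct) auto

lemma conj_inj[simp]: "(cd_conj x = cd_conj y) = (x = y)"
  by (metis conj_conj)

lemma isreal_neg[simp]: "isreal (cd_neg x) = isreal x"
  by (induction x rule: cd_neg.induct) auto

lemma len_Suc: "length x = Suc k \<Longrightarrow> \<exists>a x'. x = a # x' \<and> length x' = k"
  by (cases x) auto

lemma conj_real: "length x = Suc k \<Longrightarrow> cd_conj x = (if isreal x then x else cd_neg x)"
proof (induction k arbitrary: x)
  case 0 then show ?case by (auto simp: length_Suc_conv)
next
  case (Suc k)
  then obtain a x' where x: "x = a # x'" "length x' = Suc k" by (metis len_Suc)
  have "x' \<noteq> []" using x(2) by auto
  then show ?case using Suc.IH[OF x(2)] x by auto
qed

lemma mult_neg:
  "length x = Suc k \<Longrightarrow> length y = Suc k \<Longrightarrow>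
   cd_mult x (cd_neg y) = cd_neg (cd_mult x y) \<and> cd_mult (cd_neg x) y = cd_neg (cd_mult x y)"
proof (induction k arbitrary: x y)
  case 0 then show ?case by (auto simp: length_Suc_conv)
next
  case (Suc k)
  obtain a x' where x: "x = a # x'" "length x' = Suc k" using Suc.prems by (metis len_Suc)
  obtain c y' where y: "y = c # y'" "length y' = Suc k" using Suc.prems by (metis len_Suc)
  have ne: "x' \<noteq> []" "y' \<noteq> []" using x(2) y(2) by auto
  show ?case using x y ne Suc.IH[of x' y'] Suc.IH[of y' x'] Suc.IH[of x' "cd_conj y'"] Suc.IH[of "cd_conj y'" x']
    by (auto simp: conj_neg)
qed

lemma mult_neg1[simp]: "length x = length y \<Longrightarrow> x \<noteq> [] \<Longrightarrow> cd_mult x (cd_neg y) = cd_neg (cd_mult x y)"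
proof -
  assume a: "length x = length y" "x \<noteq> []"
  then obtain k where "length x = Suc k" by (cases x) auto
  then show ?thesis using mult_neg[of x k y] a by simp
qed
lemma mult_neg2[simp]: "length x = length y \<Longrightarrow> x \<noteq> [] \<Longrightarrow> cd_mult (cd_neg x) y = cd_neg (cd_mult x y)"
proof -
  assume a: "length x = length y" "x \<noteq> []"
  then obtain k where "length x = Suc k" by (cases x) auto
  then show ?thesis using mult_neg[of x k y] a by simp
qed

lemma one_Suc: "cd_one (Suc k) = False # cd_one k"
  by (simp add: cd_one_def)
lemma len_one[simp]: "length (cd_one k) = Suc k"
  by (simp add: cd_one_def)
lemma one_ne[simp]: "cd_one k \<noteq> []"
  by (simp add: cd_one_def)
lemma isreal_one[simp]: "isreal (cd_one k)"
  by (induction k) (auto simp: one_Suc cd_one_def)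
lemma conj_one[simp]: "cd_conj (cd_one k) = cd_one k"
  using conj_real[of "cd_one k" k] by simp

lemma mult_one:
  "length y = Suc k \<Longrightarrow> cd_mult (cd_one k) y = y \<and> cd_mult y (cd_one k) = y"
proof (induction k arbitrary: y)
  case 0 then show ?case by (auto simp: length_Suc_conv cd_one_def)
next
  case (Suc k)
  obtain c y' where y: "y = c # y'" "length y' = Suc k" using Suc.prems by (metis len_Suc)
  have ne: "y' \<noteq> []" using y(2) by auto
  show ?case using y ne Suc.IH[of y'] by (auto simp: one_Suc)
qed

lemma conj_mult:
  "length x = Suc k \<Longrightarrow> length y = Suc k \<Longrightarrow>
   cd_conj (cd_mult x y) = cd_mult (cd_conj y) (cd_conj x)"
proof (induction k arbitrary: x y)
  case 0 then show ?case by (auto simp: length_Suc_conv)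
next
  case (Suc k)
  obtain a x' where x: "x = a # x'" "length x' = Suc k" using Suc.prems by (metis len_Suc)
  obtain c y' where y: "y = c # y'" "length y' = Suc k" using Suc.prems by (metis len_Suc)
  have ne: "x' \<noteq> []" "y' \<noteq> []" using x(2) y(2) by auto
  show ?case using x y ne Suc.IH[of x' y'] Suc.IH[of y' x'] Suc.IH[of x' "cd_conj y'"] Suc.IH[of "cd_conj y'" x']
    by (auto simp: conj_neg)
qed

lemma cancel:
  "length x = Suc k \<Longrightarrow> length y = Suc k \<Longrightarrow> length y' = Suc k \<Longrightarrow>
   (cd_mult x y = cd_mult x y' \<longrightarrow> y = y') \<and> (cd_mult y x = cd_mult y' x \<longrightarrow> y = y')"
proof (induction k arbitrary: x y y')
  case 0 then show ?case by (auto simp: length_Suc_conv)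
next
  case (Suc k)
  obtain a x1 where x: "x = a # x1" "length x1 = Suc k" using Suc.prems by (metis len_Suc)
  obtain c y1 where y: "y = c # y1" "length y1 = Suc k" using Suc.prems by (metis len_Suc)
  obtain d y2 where y': "y' = d # y2" "length y2 = Suc k" using Suc.prems by (metis len_Suc)
  have ne: "x1 \<noteq> []" "y1 \<noteq> []" "y2 \<noteq> []" using x(2) y(2) y'(2) by auto
  show ?case using x y y' ne Suc.IH[of x1 y1 y2] Suc.IH[of x1 "cd_conj y1" "cd_conj y2"] Suc.IH[of "cd_conj x1" y1 y2]
    by (auto split: if_splits)
qed


lemma real_cases: "length x = Suc k \<Longrightarrow> isreal x \<longleftrightarrow> x = cd_one k \<or> x = cd_neg (cd_one k)"
proof (induction k arbitrary: x)
  case 0 then show ?case by (auto simp: length_Suc_conv cd_one_def)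
next
  case (Suc k)
  then obtain a x' where x: "x = a # x'" "length x' = Suc k" by (metis len_Suc)
  have "x' \<noteq> []" using x(2) by auto
  then show ?case using Suc.IH[OF x(2)] x by (auto simp: one_Suc)
qed

lemma real_pair: "length x = Suc k \<Longrightarrow> length y = Suc k \<Longrightarrow> isreal x \<Longrightarrow> isreal y \<Longrightarrow>
  x = y \<or> x = cd_neg y"
  using real_cases[of x k] real_cases[of y k] by auto

lemma comm:
  "length x = Suc k \<Longrightarrow> length y = Suc k \<Longrightarrow>
   cd_mult x y = (if anti x y then cd_neg (cd_mult y x) else cd_mult y x)"
proof (induction k arbitrary: x y)
  case 0 then show ?case by (auto simp: length_Suc_conv anti_def)
next
  case (Suc k)
  obtain a x' where x: "x = a # x'" "length x' = Suc k" using Suc.prems by (metis len_Suc)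
  obtain c y' where y: "y = c # y'" "length y' = Suc k" using Suc.prems by (metis len_Suc)
  have ne: "x' \<noteq> []" "y' \<noteq> []" using x(2) y(2) by auto
  note cx = conj_real[OF x(2)] and cy = conj_real[OF y(2)]
  note IH = Suc.IH[OF x(2) y(2)]
  note rp = real_pair[OF x(2) y(2)]
  have nfx: "cd_neg (cd_mult y' x') \<noteq> cd_mult y' x'" using ne y x by simp
  show ?case
  proof (cases a; cases c)
    assume "a" "c"
    then show ?thesis using x y ne cx cy IH rp nfx by (auto simp: anti_def split: if_splits)
  next
    assume "a" "\<not>c"
    then show ?thesis using x y ne cx cy IH rp nfx by (auto simp: anti_def split: if_splits)
  next
    assume "\<not>a" "c"
    then show ?thesis using x y ne cx cy IH rp nfx by (auto simp: anti_def split: if_splits)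
  next
    assume "\<not>a" "\<not>c"
    then show ?thesis using x y ne cx cy IH rp nfx by (auto simp: anti_def split: if_splits)
  qed
qed


lemma anti_negR[simp]: "anti x (cd_neg p) = anti x p"
  by (auto simp: anti_def)
lemma anti_negL[simp]: "anti (cd_neg x) p = anti x p"
  by (auto simp: anti_def)

lemma eq1: "length x = Suc k \<Longrightarrow> length p = Suc k \<Longrightarrow>
  cd_mult (cd_conj x) (cd_conj (if anti x p then cd_neg p else p)) = cd_conj (cd_mult x p)"
  using conj_real[of x k] length_0_conv[of x] length_0_conv[of p] conj_real[of p k] comm[of x k p] conj_mult[of x k p]
  by (auto simp: conj_neg)

lemma eq2: "length x = Suc k \<Longrightarrow> length p = Suc k \<Longrightarrow>
  cd_mult (cd_conj (if anti x p then cd_neg p else p)) (cd_conj x) = cd_conj (cd_mult p x)"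
  using conj_real[of x k] length_0_conv[of x] length_0_conv[of p] conj_real[of p k] comm[of x k p] conj_mult[of p k x]
  by (auto simp: conj_neg)

lemma eq3: "length x = Suc k \<Longrightarrow> length p = Suc k \<Longrightarrow>
  cd_mult (cd_conj x) (if \<not> isreal x \<and> \<not> anti x p then cd_neg p else p) = cd_mult p x"
  using conj_real[of x k] length_0_conv[of x] length_0_conv[of p] comm[of x k p]
  by (auto simp: conj_neg anti_def)

lemma eq4: "length x = Suc k \<Longrightarrow> length p = Suc k \<Longrightarrow>
  cd_mult x (if \<not> isreal x \<and> \<not> anti x p then cd_neg p else p) = cd_mult p (cd_conj x)"
  using conj_real[of x k] length_0_conv[of x] length_0_conv[of p] comm[of x k p]
  by (auto simp: conj_neg anti_def)


definition flip :: "bool list \<Rightarrow> bool list \<Rightarrow> bool" where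
  "flip x z = (if hd z then \<not> isreal x \<and> \<not> anti x (tl (tl z)) else anti x (tl (tl z)))"

lemma factor:
  assumes "length x = Suc k" "length z = Suc (Suc (Suc k))"
  shows "Lxy (Suc (Suc k)) (False # False # x) (gen_nm1 (Suc (Suc k))) z = (if flip x z then cd_neg z else z)"
proof -
  obtain b z1 where z1: "z = b # z1" "length z1 = Suc (Suc k)" using assms(2) by (metis len_Suc)
  obtain c p where z2: "z1 = c # p" "length p = Suc k" using z1(2) by (metis len_Suc)
  have ne: "x \<noteq> []" "p \<noteq> []" using assms(1) z2(2) by auto
  have E: "gen_nm1 (Suc (Suc k)) = False # True # cd_one k" by (simp add: gen_nm1_def)
  have EX: "cd_mult (gen_nm1 (Suc (Suc k))) (False # False # x) = False # True # cd_conj x"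
    using mult_one[of "cd_conj x" k] ne assms(1) by (simp add: E)
  define v where "v = (if flip x z then cd_neg z else z)"
  have vQ: "v \<in> Q (Suc (Suc k))" by (simp add: v_def Q_def assms)
  have inj: "inj_on (Lmap (False # True # cd_conj x)) (Q (Suc (Suc k)))"
  proof (rule inj_onI)
    fix u w assume u: "u \<in> Q (Suc (Suc k))" and w: "w \<in> Q (Suc (Suc k))"
      and e: "Lmap (False # True # cd_conj x) u = Lmap (False # True # cd_conj x) w"
    have "length (False # True # cd_conj x) = Suc (Suc (Suc k))" using assms(1) by simp
    moreover have "length u = Suc (Suc (Suc k))" "length w = Suc (Suc (Suc k))" using u w by (auto simp: Q_def)
    ultimately show "u = w" using e cancel[of "False # True # cd_conj x" "Suc (Suc k)" u w]
      unfolding Lmap_def by blast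
  qed
  have eq: "Lmap (False # True # cd_conj x) v = Lmap (gen_nm1 (Suc (Suc k))) (Lmap (False # False # x) z)"
  proof (cases b; cases c)
    assume "b" "c"
    then show ?thesis unfolding Lmap_def v_def flip_def E using z1 z2 ne assms(1) eq4[of x k p]
      mult_one[of "cd_mult p (cd_conj x)" k] by (simp split: if_split_asm; metis neg_neg)
  next
    assume "b" "\<not>c"
    then show ?thesis unfolding Lmap_def v_def flip_def E using z1 z2 ne assms(1) eq3[of x k p]
      mult_one[of "cd_mult p x" k] by (simp split: if_split_asm; metis neg_neg)
  next
    assume "\<not>b" "c"
    then show ?thesis unfolding Lmap_def v_def flip_def E using z1 z2 ne assms(1) eq2[of x k p]
      mult_one[of "cd_conj (cd_mult p x)" k] by (simp split: if_split_asm; metis neg_neg)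
  next
    assume "\<not>b" "\<not>c"
    then show ?thesis unfolding Lmap_def v_def flip_def E using z1 z2 ne assms(1) eq1[of x k p]
      mult_one[of "cd_conj (cd_mult x p)" k] by (simp split: if_split_asm; metis neg_neg)
  qed
  show ?thesis unfolding Lxy_def using inv_into_f_f[OF inj vQ] eq EX by (simp add: v_def)
qed


lemma flip_neg: "length z = Suc (Suc (Suc k)) \<Longrightarrow> flip x (cd_neg z) = flip x z"
proof -
  assume a: "length z = Suc (Suc (Suc k))"
  obtain b z1 where z1: "z = b # z1" "length z1 = Suc (Suc k)" using a by (metis len_Suc)
  obtain c p where z2: "z1 = c # p" "length p = Suc k" using z1(2) by (metis len_Suc)
  have "p \<noteq> []" using z2(2) by auto
  then show ?thesis using z1 z2 by (simp add: flip_def)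
qed

lemma hprod_eq:
  "set rs \<subseteq> Q k \<Longrightarrow> length z = Suc (Suc (Suc k)) \<Longrightarrow>
   hprod (Suc (Suc k)) rs z = (if odd (length (filter (\<lambda>x. flip x z) rs)) then cd_neg z else z)"
proof (induction rs)
  case Nil then show ?case by (simp add: hprod_def)
next
  case (Cons x rs)
  have hx: "length x = Suc k" using Cons.prems by (auto simp: Q_def)
  have IH: "hprod (Suc (Suc k)) rs z = (if odd (length (filter (\<lambda>x. flip x z) rs)) then cd_neg z else z)"
    using Cons by auto
  have h: "hprod (Suc (Suc k)) (x # rs) z = Lxy (Suc (Suc k)) (False # False # x) (gen_nm1 (Suc (Suc k))) (hprod (Suc (Suc k)) rs z)"
    by (simp add: hprod_def)
  show ?case unfolding h IH using factor[OF hx, of "cd_neg z"] factor[OF hx, of z] Cons.prems(2)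
    flip_neg[OF Cons.prems(2), of x] by auto
qed

lemma count:
  assumes "reps_list k rs" "\<And>y. P (cd_neg y) = P y"
  shows "2 * length (filter P rs) = card {x \<in> Q k. P x}"
proof -
  define S where "S = {x \<in> set rs. P x}"
  have d: "distinct rs" "set rs \<subseteq> Q k" "\<forall>x \<in> Q k. (x \<in> set rs) \<noteq> (cd_neg x \<in> set rs)"
    using assms(1) by (auto simp: reps_list_def)
  have QN: "x \<in> Q k \<Longrightarrow> cd_neg x \<in> Q k" for x by (simp add: Q_def)
  have L: "length (filter P rs) = card S"
    using distinct_card[of "filter P rs"] d(1) by (simp add: S_def)
  have fin: "finite S" by (simp add: S_def)
  have U: "{x \<in> Q k. P x} = S \<union> cd_neg ` S"
  proof
    show "{x \<in> Q k. P x} \<subseteq> S \<union> cd_neg ` S"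
    proof
      fix x assume x: "x \<in> {x \<in> Q k. P x}"
      show "x \<in> S \<union> cd_neg ` S"
      proof (cases "x \<in> set rs")
        case True then show ?thesis using x by (simp add: S_def)
      next
        case False
        then have "cd_neg x \<in> set rs" using d(3) x by auto
        then have "cd_neg x \<in> S" using x assms(2) by (simp add: S_def)
        then show ?thesis by (metis UnI2 image_eqI neg_neg)
      qed
    qed
  next
    show "S \<union> cd_neg ` S \<subseteq> {x \<in> Q k. P x}"
      using d(2) assms(2) QN by (auto simp: S_def)
  qed
  have D: "S \<inter> cd_neg ` S = {}"
  proof -
    { fix y assume y: "y \<in> S" "cd_neg y \<in> S"
      then have "y \<in> Q k" using d(2) by (auto simp: S_def)
      then have False using d(3) y by (auto simp: S_def) }
    then show ?thesis by auto
  qed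
  have "card (cd_neg ` S) = card S" by (rule card_image) (auto simp: inj_on_def)
  then show ?thesis using L U D fin card_Un_disjoint[of S "cd_neg ` S"] by simp
qed

lemma card_Q: "card (Q k) = 2 ^ Suc k"
proof -
  have "Q k = {xs. set xs \<subseteq> UNIV \<and> length xs = Suc k}" by (auto simp: Q_def)
  then show ?thesis using card_lists_length_eq[of "UNIV :: bool set" "Suc k"] by simp
qed

lemma fin_Q: "finite (Q k)"
proof -
  have "Q k = {xs. set xs \<subseteq> UNIV \<and> length xs = Suc k}" by (auto simp: Q_def)
  then show ?thesis using finite_lists_length_eq[of "UNIV :: bool set" "Suc k"] by simp
qed

lemma reals_Q: "{x \<in> Q k. isreal x} = {cd_one k, cd_neg (cd_one k)}"
  using real_cases[of _ k] by (auto simp: Q_def)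


lemma parity:
  assumes "reps_list k rs" "k \<ge> 1" "length p = Suc k"
  shows "odd (length (filter (\<lambda>x. flip x (b # c # p)) rs)) = b"
proof -
  let ?P = "\<lambda>x. flip x (b # c # p)"
  have C: "2 * length (filter ?P rs) = card {x \<in> Q k. ?P x}"
    by (rule count[OF assms(1)]) (simp add: flip_def)
  have pQ: "p \<in> Q k" "cd_neg p \<in> Q k" using assms(3) by (auto simp: Q_def)
  have oQ: "cd_one k \<in> Q k" "cd_neg (cd_one k) \<in> Q k" by (auto simp: Q_def)
  have pne: "p \<noteq> []" using assms(3) by auto
  obtain m where m: "2 ^ k = 2 * (m :: nat)" "m \<ge> 1" using assms(2)
  proof -
    have "2 ^ k = 2 * (2 ^ (k - 1) :: nat)" using assms(2) by (cases k) auto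
    then show ?thesis using that[of "2 ^ (k - 1)"] by simp
  qed
  have cQ: "card (Q k) = 4 * m" using card_Q[of k] m by simp
  show ?thesis
  proof (cases b)
    case False
    show ?thesis
    proof (cases "isreal p")
      case True
      have e: "{x \<in> Q k. ?P x} = {}" using False True by (auto simp: flip_def anti_def)
      have "length (filter ?P rs) = 0" using C unfolding e by simp
      then show ?thesis using False by simp
    next
      case np: False
      have "{x \<in> Q k. ?P x} = Q k - {cd_one k, cd_neg (cd_one k), p, cd_neg p}"
        using False np reals_Q[of k] by (auto simp: flip_def anti_def)
      moreover have "card {cd_one k, cd_neg (cd_one k), p, cd_neg p} = 4"
        using np pne neg_fix'[of p] neg_fix'[of "cd_one k"] by (auto simp: card_insert_if)
      moreover have "{cd_one k, cd_neg (cd_one k), p, cd_neg p} \<subseteq> Q k" using pQ oQ by auto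
      ultimately have "card {x \<in> Q k. ?P x} = 4 * m - 4"
        using card_Diff_subset[of "{cd_one k, cd_neg (cd_one k), p, cd_neg p}" "Q k"] cQ by simp
      then have "length (filter ?P rs) = 2 * m - 2" using C by simp
      then show ?thesis using False m(2) by simp
    qed
  next
    case True
    show ?thesis
    proof (cases "isreal p")
      case rp: True
      have "{x \<in> Q k. ?P x} = Q k - {cd_one k, cd_neg (cd_one k)}"
        using True rp reals_Q[of k] by (auto simp: flip_def anti_def)
      moreover have "card {cd_one k, cd_neg (cd_one k)} = 2"
        using neg_fix'[of "cd_one k"] by (auto simp: card_insert_if)
      moreover have "{cd_one k, cd_neg (cd_one k)} \<subseteq> Q k" using oQ by auto
      ultimately have "card {x \<in> Q k. ?P x} = 4 * m - 2"
        using card_Diff_subset[of "{cd_one k, cd_neg (cd_one k)}" "Q k"] cQ by simp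
      then have "length (filter ?P rs) = 2 * m - 1" using C by simp
      then show ?thesis using True m(2) by simp
    next
      case np: False
      have "{x \<in> Q k. ?P x} = {p, cd_neg p}"
        using True np pQ by (auto simp: flip_def anti_def)
      moreover have "card {p, cd_neg p} = 2" using pne neg_fix'[of p] by (auto simp: card_insert_if)
      ultimately show ?thesis using C True by simp
    qed
  qed
qed

theorem mainTheorem15:
  fixes n :: nat and rs :: "bool list list"
  assumes "n \<ge> 4" and "reps_list (n - 2) rs"
  shows "\<forall>z \<in> Q n. hprod n rs z = (if z \<in> (\<lambda>x. False # x) ` Q (n - 1) then z else cd_neg z)"
proof
  fix z assume zQ: "z \<in> Q n"
  obtain k where n: "n = Suc (Suc k)" and k: "k \<ge> 1" using assms(1)
    using that[of "n - 2"] by simp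
  have rk: "reps_list k rs" using assms(2) n by simp
  have lz: "length z = Suc (Suc (Suc k))" using zQ n by (simp add: Q_def)
  obtain b z1 where z1: "z = b # z1" "length z1 = Suc (Suc k)" using lz by (metis len_Suc)
  obtain c p where z2: "z1 = c # p" "length p = Suc k" using z1(2) by (metis len_Suc)
  have sub: "set rs \<subseteq> Q k" using rk by (simp add: reps_list_def)
  have img: "(z \<in> (\<lambda>x. False # x) ` Q (n - 1)) = (\<not> b)"
    using z1 z2 n by (auto simp: Q_def)
  show "hprod n rs z = (if z \<in> (\<lambda>x. False # x) ` Q (n - 1) then z else cd_neg z)"
    unfolding img using hprod_eq[OF sub lz] parity[OF rk k z2(2), of b c] n z1 z2 by simp
qed

end
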